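(* Each of the following priors $\pi$ on $(0,\infty)$ satisfies assumptions A1, A2 and A3: (1) any distribution with bounded support satisfying A1 and A2 (e.g. the uniform distribution on $(0,c)$, $c>0$), for which A3 holds with any prescribed $\rho>0$; (2) the generalized Gamma distribution with density proportional to $\alpha^{d-1}e^{-(\alpha/a)^p}$ ($a,d>0$), provided $p>1$, for which A3 holds with any prescribed $\rho>0$; (3) the Gamma distribution with shape $\nu>0$ and rate $\rho>0$, for which A3 holds with this $\rho$.
   Context: (A1) $\pi$ is absolutely continuous w.r.t. Lebesgue measure, its density also denoted $\pi$; (A2) there exist $\epsilon,\delta,\beta$ such that $\frac1\delta\alpha^\beta\le\pi(\alpha)\le\delta\alpha^\beta$ for all $\alpha\in(0,\epsilon)$; (A3) there exist $D,\nu,\rho>0$ such that $\int\alpha^s\pi(\alpha)d\alpha<D\rho^{-s}\Gamma(\nu+s+1)$ for every integer $s\ge1$. *)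

theory Defs
  imports "HOL-Probability.Probability"
begin

definition prior_on_pos :: "real measure \<Rightarrow> bool" where
  "prior_on_pos M \<longleftrightarrow> prob_space M \<and> sets M = sets borel \<and> emeasure M {0<..} = 1"

definition A1 :: "real measure \<Rightarrow> (real \<Rightarrow> real) \<Rightarrow> bool" where
  "A1 M f \<longleftrightarrow> f \<in> borel_measurable borel \<and> (\<forall>x. 0 \<le> f x)
      \<and> M = density lborel (\<lambda>x. ennreal (f x))"

definition A2 :: "(real \<Rightarrow> real) \<Rightarrow> bool" where
  "A2 f \<longleftrightarrow> (\<exists>\<epsilon> \<delta> \<beta>. \<epsilon> > 0 \<and> \<delta> > 0 \<and>
      (\<forall>\<alpha>\<in>{0<..<\<epsilon>}. \<alpha> powr \<beta> / \<delta> \<le> f \<alpha> \<and> f \<alpha> \<le> \<delta> * \<alpha> powr \<beta>))"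

text \<open>(A3) with given constants rho and nu (the integral is a nonnegative Lebesgue integral
  over (0,infinity), so finiteness is part of the strict inequality).\<close>
definition A3_with :: "(real \<Rightarrow> real) \<Rightarrow> real \<Rightarrow> real \<Rightarrow> bool" where
  "A3_with f \<rho> \<nu> \<longleftrightarrow> (\<exists>D>0. \<forall>s::nat. s \<ge> 1 \<longrightarrow>
      (\<integral>\<^sup>+ \<alpha>\<in>{0<..}. ennreal (\<alpha> ^ s * f \<alpha>) \<partial>lborel)
        < ennreal (D * \<rho> powr (- real s) * Gamma (\<nu> + real s + 1)))"

definition A3_rho :: "(real \<Rightarrow> real) \<Rightarrow> real \<Rightarrow> bool" where
  "A3_rho f \<rho> \<longleftrightarrow> \<rho> > 0 \<and> (\<exists>\<nu>>0. A3_with f \<rho> \<nu>)"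

definition A3 :: "(real \<Rightarrow> real) \<Rightarrow> bool" where
  "A3 f \<longleftrightarrow> (\<exists>\<rho>. A3_rho f \<rho>)"

definition gen_gamma_kernel :: "real \<Rightarrow> real \<Rightarrow> real \<Rightarrow> real \<Rightarrow> real" where
  "gen_gamma_kernel a d p x = (if x > 0 then x powr (d - 1) * exp (- ((x / a) powr p)) else 0)"

definition gen_gamma_density :: "real \<Rightarrow> real \<Rightarrow> real \<Rightarrow> real \<Rightarrow> real" where
  "gen_gamma_density a d p x =
     gen_gamma_kernel a d p x / (\<integral>y. gen_gamma_kernel a d p y \<partial>lborel)"

definition gamma_density :: "real \<Rightarrow> real \<Rightarrow> real \<Rightarrow> real" where
  "gamma_density \<nu> \<rho> x =
     (if x > 0 then \<rho> powr \<nu> / Gamma \<nu> * x powr (\<nu> - 1) * exp (- \<rho> * x) else 0)"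

end

theory Submission
  imports Defs
begin


lemma gamma_scaled:
  fixes x r :: real assumes x: "x > 0" and r: "r > 0"
  shows "(\<integral>\<^sup>+t. ennreal (indicator {0<..} t * t powr (x - 1) * exp (- r * t)) \<partial>lborel)
           = ennreal (Gamma x / r powr x)"
proof -
  define g where "g = (\<lambda>t::real. ennreal (indicator {0..} t * t powr (x - 1) / exp t))"
  have gm: "g \<in> borel_measurable borel" unfolding g_def by measurable
  have "ennreal (Gamma x) = integral\<^sup>N lborel g"
    using Gamma_conv_nn_integral_real[OF x] by (simp add: g_def)
  also have "\<dots> = ennreal r * (\<integral>\<^sup>+y. g (0 + r * y) \<partial>lborel)"
    using nn_integral_real_affine[OF gm, of r 0] r by simp
  also have "(\<lambda>y. g (0 + r * y)) = (\<lambda>y. ennreal (r powr (x - 1)) *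
       ennreal (indicator {0<..} y * y powr (x - 1) * exp (- r * y)))"
  proof
    fix y :: real
    show "g (0 + r * y) = ennreal (r powr (x - 1)) *
       ennreal (indicator {0<..} y * y powr (x - 1) * exp (- r * y))"
    proof (cases "y > 0")
      case True
      then show ?thesis using r
        by (simp add: g_def indicator_def powr_mult exp_minus field_simps ennreal_mult'' flip: ennreal_mult)
    next
      case False
      then show ?thesis using r
        by (auto simp add: g_def indicator_def zero_le_mult_iff)
    qed
  qed
  also have "(\<integral>\<^sup>+y. ennreal (r powr (x - 1)) *
       ennreal (indicator {0<..} y * y powr (x - 1) * exp (- r * y)) \<partial>lborel)
     = ennreal (r powr (x - 1)) * (\<integral>\<^sup>+y. ennreal (indicator {0<..} y * y powr (x - 1) * exp (- r * y)) \<partial>lborel)"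
    by (rule nn_integral_cmult) measurable
  also have "ennreal r * (ennreal (r powr (x - 1)) * I) = ennreal (r powr x) * I" for I
  proof -
    have "r * r powr (x - 1) = r powr x" using r by (simp add: powr_mult_base)
    then show ?thesis using r by (simp add: mult.assoc[symmetric] ennreal_mult[symmetric] del: ennreal_mult')
  qed
  finally have eq: "ennreal (Gamma x) = ennreal (r powr x) * (\<integral>\<^sup>+t. ennreal (indicator {0<..} t * t powr (x - 1) * exp (- r * t)) \<partial>lborel)" .
  have "ennreal (Gamma x / r powr x) = ennreal (Gamma x) * ennreal (1 / r powr x)"
    using r Gamma_real_pos[OF x] by (subst ennreal_mult[symmetric]) auto
  also have "\<dots> = (\<integral>\<^sup>+t. ennreal (indicator {0<..} t * t powr (x - 1) * exp (- r * t)) \<partial>lborel)"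
  proof -
    have "ennreal (r powr x) * ennreal (1 / r powr x) = 1"
      using r by (subst ennreal_mult[symmetric]) auto
    moreover have ac: "(A::ennreal) * I * B = I * (A * B)" for A I B by (simp add: mult_ac)
    ultimately show ?thesis unfolding eq ac by simp
  qed
  finally show ?thesis by simp
qed


lemma moment_formula:
  fixes C \<nu> r :: real and s :: nat
  assumes C: "C \<ge> 0" and nu: "\<nu> > 0" and r: "r > 0"
  shows "(\<integral>\<^sup>+ \<alpha>\<in>{0<..}. ennreal (\<alpha> ^ s * (if \<alpha> > 0 then C * \<alpha> powr (\<nu> - 1) * exp (- r * \<alpha>) else 0)) \<partial>lborel)
       = ennreal (C * (Gamma (\<nu> + real s) / r powr (\<nu> + real s)))"
proof -
  have "(\<integral>\<^sup>+ \<alpha>\<in>{0<..}. ennreal (\<alpha> ^ s * (if \<alpha> > 0 then C * \<alpha> powr (\<nu> - 1) * exp (- r * \<alpha>) else 0)) \<partial>lborel)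
     = (\<integral>\<^sup>+ \<alpha>. ennreal C * ennreal (indicator {0<..} \<alpha> * \<alpha> powr ((\<nu> + real s) - 1) * exp (- r * \<alpha>)) \<partial>lborel)"
  proof (rule nn_integral_cong)
    fix \<alpha> :: real
    show "ennreal (\<alpha> ^ s * (if \<alpha> > 0 then C * \<alpha> powr (\<nu> - 1) * exp (- r * \<alpha>) else 0)) * indicator {0<..} \<alpha>
      = ennreal C * ennreal (indicator {0<..} \<alpha> * \<alpha> powr ((\<nu> + real s) - 1) * exp (- r * \<alpha>))"
    proof (cases "\<alpha> > 0")
      case True
      have "\<alpha> ^ s * \<alpha> powr (\<nu> - 1) = \<alpha> powr ((\<nu> + real s) - 1)"
        using True by (simp add: powr_realpow[symmetric] powr_add[symmetric] algebra_simps)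
      then have "\<alpha> ^ s * (C * \<alpha> powr (\<nu> - 1) * exp (- r * \<alpha>)) = C * (\<alpha> powr ((\<nu> + real s) - 1) * exp (- r * \<alpha>))"
        by (metis mult.assoc mult.left_commute)
      then show ?thesis using True C by (simp add: ennreal_mult[symmetric])
    qed simp
  qed
  also have "\<dots> = ennreal C * (\<integral>\<^sup>+ \<alpha>. ennreal (indicator {0<..} \<alpha> * \<alpha> powr ((\<nu> + real s) - 1) * exp (- r * \<alpha>)) \<partial>lborel)"
    by (rule nn_integral_cmult) measurable
  also have "\<dots> = ennreal C * ennreal (Gamma (\<nu> + real s) / r powr (\<nu> + real s))"
    using nu r by (subst gamma_scaled) auto
  also have "\<dots> = ennreal (C * (Gamma (\<nu> + real s) / r powr (\<nu> + real s)))"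
    using C nu r Gamma_real_pos[of "\<nu> + real s"] by (subst ennreal_mult) auto
  finally show ?thesis .
qed

lemma A2I:
  assumes "\<epsilon> > 0" "L > 0" "U > 0"
    and "\<And>\<alpha>. \<alpha> \<in> {0<..<\<epsilon>} \<Longrightarrow> L * \<alpha> powr \<beta> \<le> f \<alpha> \<and> f \<alpha> \<le> U * \<alpha> powr \<beta>"
  shows "A2 f"
  unfolding A2_def
proof (intro exI conjI ballI)
  show "\<epsilon> > 0" using assms by auto
  show "U + 1 / L > 0" using assms by (intro add_pos_pos) auto
  fix \<alpha> assume a: "\<alpha> \<in> {0<..<\<epsilon>}"
  have p: "\<alpha> powr \<beta> \<ge> 0" by simp
  have "0 < (U + 1/L) * (1/L)" using assms by (intro mult_pos_pos add_pos_pos) auto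
  then have "1 / (U + 1/L) \<le> 1 / (1/L)" using assms by (intro divide_left_mono) auto
  then have "1 / (U + 1/L) \<le> L" by simp
  then have "\<alpha> powr \<beta> / (U + 1 / L) \<le> L * \<alpha> powr \<beta>"
    using mult_right_mono[OF _ p, of "1 / (U + 1/L)" L] by (simp add: mult.commute)
  then show "\<alpha> powr \<beta> / (U + 1 / L) \<le> f \<alpha>" using assms(4)[OF a] by linarith
  have "U * \<alpha> powr \<beta> \<le> (U + 1 / L) * \<alpha> powr \<beta>"
    using assms by (intro mult_right_mono) auto
  then show "f \<alpha> \<le> (U + 1 / L) * \<alpha> powr \<beta>" using assms(4)[OF a] by linarith
qed

lemma prior_from:
  fixes f :: "real \<Rightarrow> real"
  assumes m: "f \<in> borel_measurable borel" and nn: "\<And>x. 0 \<le> f x"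
    and z: "\<And>x. x \<le> 0 \<Longrightarrow> f x = 0"
    and one: "(\<integral>\<^sup>+ \<alpha>\<in>{0<..}. ennreal (\<alpha> ^ 0 * f \<alpha>) \<partial>lborel) = 1"
  shows "prior_on_pos (density lborel (\<lambda>x. ennreal (f x)))" "A1 (density lborel (\<lambda>x. ennreal (f x))) f"
proof -
  have e: "(\<integral>\<^sup>+ \<alpha>. ennreal (f \<alpha>) * indicator A \<alpha> \<partial>lborel) = 1" if "{0<..} \<subseteq> A" for A
  proof -
    have "(\<integral>\<^sup>+ \<alpha>. ennreal (f \<alpha>) * indicator A \<alpha> \<partial>lborel) = (\<integral>\<^sup>+ \<alpha>\<in>{0<..}. ennreal (\<alpha> ^ 0 * f \<alpha>) \<partial>lborel)"
      using that z by (intro nn_integral_cong) (auto simp: indicator_def not_less)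
    then show ?thesis using one by simp
  qed
  have sp: "space (density lborel (\<lambda>x. ennreal (f x))) = UNIV" by simp
  have "emeasure (density lborel (\<lambda>x. ennreal (f x))) UNIV = 1"
    using e[of UNIV] m by (subst emeasure_density) auto
  then have "prob_space (density lborel (\<lambda>x. ennreal (f x)))"
    by (intro prob_spaceI) (simp only: sp)
  moreover have "emeasure (density lborel (\<lambda>x. ennreal (f x))) {0<..} = 1"
    using e[of "{0<..}"] m by (subst emeasure_density) auto
  ultimately show "prior_on_pos (density lborel (\<lambda>x. ennreal (f x)))"
    unfolding prior_on_pos_def by simp
  show "A1 (density lborel (\<lambda>x. ennreal (f x))) f"
    unfolding A1_def using m nn by auto
qed

lemma part3:
  fixes \<nu> \<rho> :: real assumes nu: "\<nu> > 0" and r: "\<rho> > 0"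
  shows "prior_on_pos (density lborel (\<lambda>x. ennreal (gamma_density \<nu> \<rho> x)))
     \<and> A1 (density lborel (\<lambda>x. ennreal (gamma_density \<nu> \<rho> x))) (gamma_density \<nu> \<rho>)
     \<and> A2 (gamma_density \<nu> \<rho>) \<and> A3 (gamma_density \<nu> \<rho>) \<and> A3_rho (gamma_density \<nu> \<rho>) \<rho>"
proof -
  define C where "C = \<rho> powr \<nu> / Gamma \<nu>"
  have G: "Gamma \<nu> > 0" using Gamma_real_pos nu by auto
  have C: "C > 0" unfolding C_def using G r by auto
  have fe: "gamma_density \<nu> \<rho> = (\<lambda>x. if x > 0 then C * x powr (\<nu> - 1) * exp (- \<rho> * x) else 0)"
    unfolding gamma_density_def C_def by auto
  have mom: "(\<integral>\<^sup>+ \<alpha>\<in>{0<..}. ennreal (\<alpha> ^ s * gamma_density \<nu> \<rho> \<alpha>) \<partial>lborel)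
       = ennreal (C * (Gamma (\<nu> + real s) / \<rho> powr (\<nu> + real s)))" for s
    unfolding fe using moment_formula[OF less_imp_le[OF C] nu r] by simp
  have meas: "gamma_density \<nu> \<rho> \<in> borel_measurable borel" unfolding fe by measurable
  have nn: "0 \<le> gamma_density \<nu> \<rho> x" for x unfolding fe using C by auto
  have one: "(\<integral>\<^sup>+ \<alpha>\<in>{0<..}. ennreal (\<alpha> ^ 0 * gamma_density \<nu> \<rho> \<alpha>) \<partial>lborel) = 1"
    unfolding mom using G r by (simp add: C_def)
  note pr = prior_from[OF meas nn _ one]
  have a2: "A2 (gamma_density \<nu> \<rho>)"
  proof (rule A2I[of 1 "C * exp (- \<rho>)" C])
    fix \<alpha> :: real assume a: "\<alpha> \<in> {0<..<1}"
    have "exp (- \<rho>) \<le> exp (- \<rho> * \<alpha>)" "exp (- \<rho> * \<alpha>) \<le> 1" using a r by (auto simp: mult_le_cancel_left1)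
    then show "C * exp (- \<rho>) * \<alpha> powr (\<nu> - 1) \<le> gamma_density \<nu> \<rho> \<alpha> \<and>
         gamma_density \<nu> \<rho> \<alpha> \<le> C * \<alpha> powr (\<nu> - 1)"
      unfolding fe using a C by (auto simp: mult_left_mono mult_right_mono mult.assoc mult.left_commute intro!: mult_left_mono)
  qed (use C in auto)
  have a3: "A3_rho (gamma_density \<nu> \<rho>) \<rho>"
  proof -
    have "\<forall>s::nat. s \<ge> 1 \<longrightarrow> (\<integral>\<^sup>+ \<alpha>\<in>{0<..}. ennreal (\<alpha> ^ s * gamma_density \<nu> \<rho> \<alpha>) \<partial>lborel)
        < ennreal (2 / (Gamma \<nu> * \<nu>) * \<rho> powr (- real s) * Gamma (\<nu> + real s + 1))"
    proof (intro allI impI)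
    fix s :: nat
    have g1: "Gamma (\<nu> + real s + 1) = (\<nu> + real s) * Gamma (\<nu> + real s)"
      by (rule Gamma_plus1) (use nu in \<open>auto dest: nonpos_Ints_nonpos\<close>)
    have gp: "Gamma (\<nu> + real s) > 0" using nu by (intro Gamma_real_pos) auto
    have "C * (Gamma (\<nu> + real s) / \<rho> powr (\<nu> + real s)) = Gamma (\<nu> + real s) / (Gamma \<nu> * \<rho> powr real s)"
      unfolding C_def using r G by (simp add: powr_add field_simps)
    also have "\<dots> < 2 / (Gamma \<nu> * \<nu>) * \<rho> powr (- real s) * Gamma (\<nu> + real s + 1)"
    proof -
      have q: "2 / (Gamma \<nu> * \<nu>) * \<rho> powr (- real s) * ((\<nu> + real s) * Gamma (\<nu> + real s))
          = (Gamma (\<nu> + real s) / (Gamma \<nu> * \<rho> powr real s)) * (2 * (\<nu> + real s) / \<nu>)"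
        using r G nu by (simp add: powr_minus field_simps)
      have k: "1 < 2 * (\<nu> + real s) / \<nu>" using nu by (simp add: field_simps)
      have p: "0 < Gamma (\<nu> + real s) / (Gamma \<nu> * \<rho> powr real s)" using gp G r by simp
      show ?thesis unfolding g1 q using mult_strict_left_mono[OF k p] by simp
    qed
    finally show "(\<integral>\<^sup>+ \<alpha>\<in>{0<..}. ennreal (\<alpha> ^ s * gamma_density \<nu> \<rho> \<alpha>) \<partial>lborel)
        < ennreal (2 / (Gamma \<nu> * \<nu>) * \<rho> powr (- real s) * Gamma (\<nu> + real s + 1))"
      unfolding mom using C gp r by (subst ennreal_less_iff) auto
    qed
    moreover have "2 / (Gamma \<nu> * \<nu>) > 0" using nu G by auto
    ultimately show ?thesis unfolding A3_rho_def A3_with_def using r nu by blast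
  qed
  show ?thesis using pr a2 a3 unfolding A3_def by (auto simp: fe)
qed


lemma exp_bound:
  fixes a p r :: real assumes a: "a > 0" and p: "p > 1" and r: "r > 0"
  shows "\<exists>K. \<forall>x>0. exp (- ((x / a) powr p)) \<le> exp K * exp (- r * x)"
proof -
  define x0 where "x0 = a * (r * a) powr (1 / (p - 1))"
  have x0: "x0 > 0" unfolding x0_def using a r by auto
  have "r * x - r * x0 \<le> (x / a) powr p" if x: "x > 0" for x
  proof (cases "x \<ge> x0")
    case True
    have "(r * a) powr (1 / (p - 1)) \<le> x / a" using True a unfolding x0_def by (simp add: field_simps)
    then have "((r * a) powr (1 / (p - 1))) powr (p - 1) \<le> (x / a) powr (p - 1)"
      using p by (intro powr_mono2) auto
    also have "((r * a) powr (1 / (p - 1))) powr (p - 1) = r * a"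
      using p a r by (simp add: powr_powr)
    finally have h: "r * a \<le> (x / a) powr (p - 1)" .
    have "r * x = (x / a) * (r * a)" using a by (simp add: field_simps)
    also have "\<dots> \<le> (x / a) * (x / a) powr (p - 1)" using h x a by (intro mult_left_mono) auto
    also have "\<dots> = (x / a) powr p" using x a powr_mult_base[of "x/a" "p-1"] by simp
    finally show ?thesis using x0 r by (smt (verit) mult_pos_pos)
  next
    case False
    then have "r * x - r * x0 < 0" using r by (simp add: mult_strict_left_mono)
    then show ?thesis by (smt (verit) powr_ge_zero)
  qed
  then have "exp (- ((x / a) powr p)) \<le> exp (r * x0) * exp (- r * x)" if "x > 0" for x
  proof -
    have "- ((x / a) powr p) \<le> r * x0 + (- r * x)" using \<open>\<And>x. x > 0 \<Longrightarrow> _\<close>[OF that] by simp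
    then show ?thesis by (simp only: exp_add[symmetric] exp_le_cancel_iff)
  qed
  then show ?thesis by blast
qed




lemma moment_ineq:
  fixes B \<nu> \<rho> :: real and s :: nat
  assumes B: "B > 0" and nu: "\<nu> > 0" and r: "\<rho> > 0"
  shows "B * (Gamma (\<nu> + real s) / \<rho> powr (\<nu> + real s))
     < (2 * B / (\<nu> * \<rho> powr \<nu>)) * \<rho> powr (- real s) * Gamma (\<nu> + real s + 1)"
proof -
  have g1: "Gamma (\<nu> + real s + 1) = (\<nu> + real s) * Gamma (\<nu> + real s)"
    by (rule Gamma_plus1) (use nu in \<open>auto dest: nonpos_Ints_nonpos\<close>)
  have gp: "Gamma (\<nu> + real s) > 0" using nu by (intro Gamma_real_pos) auto
  have q: "(2 * B / (\<nu> * \<rho> powr \<nu>)) * \<rho> powr (- real s) * ((\<nu> + real s) * Gamma (\<nu> + real s))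
      = (B * (Gamma (\<nu> + real s) / \<rho> powr (\<nu> + real s))) * (2 * (\<nu> + real s) / \<nu>)"
    using r nu by (simp add: powr_minus powr_add field_simps)
  have k: "1 < 2 * (\<nu> + real s) / \<nu>" using nu by (simp add: field_simps)
  have p: "0 < B * (Gamma (\<nu> + real s) / \<rho> powr (\<nu> + real s))" using gp B r by simp
  show ?thesis unfolding g1 q using mult_strict_left_mono[OF k p] by simp
qed

lemma part2:
  fixes a d p :: real assumes a: "a > 0" and d: "d > 0" and p: "p > 1"
  shows "prior_on_pos (density lborel (\<lambda>x. ennreal (gen_gamma_density a d p x)))
     \<and> A1 (density lborel (\<lambda>x. ennreal (gen_gamma_density a d p x))) (gen_gamma_density a d p)
     \<and> A2 (gen_gamma_density a d p) \<and> A3 (gen_gamma_density a d p)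
     \<and> (\<forall>\<rho>>0. A3_rho (gen_gamma_density a d p) \<rho>)"
proof -
  define k where "k = gen_gamma_kernel a d p"
  define Z where "Z = (\<integral>y. k y \<partial>lborel)"
  have fdef: "gen_gamma_density a d p = (\<lambda>x. k x / Z)"
    unfolding gen_gamma_density_def k_def Z_def by auto
  have km: "k \<in> borel_measurable borel" unfolding k_def gen_gamma_kernel_def by measurable
  note [measurable] = km
  have knn: "k x \<ge> 0" for x unfolding k_def gen_gamma_kernel_def by auto
  have kz: "k x = 0" if "x \<le> 0" for x using that unfolding k_def gen_gamma_kernel_def by auto
  have kpos: "k x > 0" if "x > 0" for x using that unfolding k_def gen_gamma_kernel_def by auto
  have kbound: "\<exists>K. \<forall>x>0. k x \<le> exp K * x powr (d - 1) * exp (- r * x)" if r: "r > 0" for r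
  proof -
    obtain K where K: "\<forall>x>0. exp (- ((x / a) powr p)) \<le> exp K * exp (- r * x)"
      using exp_bound[OF a p r] by blast
    have "k x \<le> exp K * x powr (d - 1) * exp (- r * x)" if "x > 0" for x
    proof -
      have "k x = x powr (d - 1) * exp (- ((x / a) powr p))" using that unfolding k_def gen_gamma_kernel_def by simp
      also have "\<dots> \<le> x powr (d - 1) * (exp K * exp (- r * x))"
        using K that by (intro mult_left_mono) auto
      finally show ?thesis by (simp add: mult_ac)
    qed
    then show ?thesis by blast
  qed
  have mombound: "\<exists>K. \<forall>s::nat. (\<integral>\<^sup>+ \<alpha>\<in>{0<..}. ennreal (\<alpha> ^ s * k \<alpha>) \<partial>lborel)
      \<le> ennreal (exp K * (Gamma (d + real s) / r powr (d + real s)))" if r: "r > 0" for r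
  proof -
    obtain K where K: "\<forall>x>0. k x \<le> exp K * x powr (d - 1) * exp (- r * x)"
      using kbound[OF r] by blast
    have "(\<integral>\<^sup>+ \<alpha>\<in>{0<..}. ennreal (\<alpha> ^ s * k \<alpha>) \<partial>lborel)
      \<le> (\<integral>\<^sup>+ \<alpha>\<in>{0<..}. ennreal (\<alpha> ^ s * (if \<alpha> > 0 then exp K * \<alpha> powr (d - 1) * exp (- r * \<alpha>) else 0)) \<partial>lborel)" for s
    proof (rule nn_integral_mono)
      fix \<alpha> :: real
      show "ennreal (\<alpha> ^ s * k \<alpha>) * indicator {0<..} \<alpha> \<le>
         ennreal (\<alpha> ^ s * (if \<alpha> > 0 then exp K * \<alpha> powr (d - 1) * exp (- r * \<alpha>) else 0)) * indicator {0<..} \<alpha>"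
      proof (cases "\<alpha> > 0")
        case True
        then have "\<alpha> ^ s * k \<alpha> \<le> \<alpha> ^ s * (exp K * \<alpha> powr (d - 1) * exp (- r * \<alpha>))"
          using K by (intro mult_left_mono) auto
        then show ?thesis using True by (auto intro: ennreal_leI)
      qed simp
    qed
    also have "\<dots> s = ennreal (exp K * (Gamma (d + real s) / r powr (d + real s)))" for s
      by (rule moment_formula) (use d r in auto)
    finally show ?thesis by blast
  qed
  have eqk: "(\<integral>\<^sup>+ \<alpha>. ennreal (k \<alpha>) \<partial>lborel) = (\<integral>\<^sup>+ \<alpha>\<in>{0<..}. ennreal (\<alpha> ^ 0 * k \<alpha>) \<partial>lborel)"
    using kz by (intro nn_integral_cong) (auto simp: indicator_def not_less)
  have fin: "(\<integral>\<^sup>+ \<alpha>. ennreal (k \<alpha>) \<partial>lborel) < \<infinity>"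
  proof -
    obtain K where "\<forall>s::nat. (\<integral>\<^sup>+ \<alpha>\<in>{0<..}. ennreal (\<alpha> ^ s * k \<alpha>) \<partial>lborel)
      \<le> ennreal (exp K * (Gamma (d + real s) / 1 powr (d + real s)))" using mombound[of 1] by auto
    then have h: "(\<integral>\<^sup>+ \<alpha>\<in>{0<..}. ennreal (\<alpha> ^ 0 * k \<alpha>) \<partial>lborel)
      \<le> ennreal (exp K * (Gamma (d + real 0) / 1 powr (d + real 0)))" by blast
    show ?thesis unfolding eqk using h by (rule le_less_trans) simp
  qed
  have kint: "integrable lborel k"
    using fin knn km by (intro integrableI_bounded) auto
  have kZ: "(\<integral>\<^sup>+ \<alpha>. ennreal (k \<alpha>) \<partial>lborel) = ennreal Z"
    unfolding Z_def using kint knn by (intro nn_integral_eq_integral) auto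
  have Zpos: "Z > 0"
  proof -
    have "Z \<ge> 0" unfolding Z_def using knn by (intro integral_nonneg_AE) auto
    moreover have "Z \<noteq> 0"
    proof
      assume "Z = 0"
      then have "AE x in lborel. k x = 0" unfolding Z_def using integral_nonneg_eq_0_iff_AE[OF kint] knn by auto
      then have "AE x in lborel. x \<notin> {0<..<1::real}" by eventually_elim (use kpos in force)
      then have "emeasure lborel {0<..<1::real} = 0"
        by (subst (asm) AE_iff_measurable[of "{0<..<1}"]) auto
      then show False by simp
    qed
    ultimately show ?thesis by simp
  qed
  have fm: "gen_gamma_density a d p \<in> borel_measurable borel" unfolding fdef using km by measurable
  have fnn: "0 \<le> gen_gamma_density a d p x" for x unfolding fdef using knn Zpos by auto
  have fz: "gen_gamma_density a d p x = 0" if "x \<le> 0" for x unfolding fdef using kz[OF that] by simp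
  have fmom: "(\<integral>\<^sup>+ \<alpha>\<in>{0<..}. ennreal (\<alpha> ^ s * gen_gamma_density a d p \<alpha>) \<partial>lborel)
     = (\<integral>\<^sup>+ \<alpha>\<in>{0<..}. ennreal (\<alpha> ^ s * k \<alpha>) \<partial>lborel) * ennreal (1 / Z)" for s
  proof -
    have "(\<integral>\<^sup>+ \<alpha>\<in>{0<..}. ennreal (\<alpha> ^ s * gen_gamma_density a d p \<alpha>) \<partial>lborel)
      = (\<integral>\<^sup>+ \<alpha>. ennreal (\<alpha> ^ s * k \<alpha>) * indicator {0<..} \<alpha> * ennreal (1 / Z) \<partial>lborel)"
    proof (rule nn_integral_cong)
      fix \<alpha> :: real
      show "ennreal (\<alpha> ^ s * gen_gamma_density a d p \<alpha>) * indicator {0<..} \<alpha> =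
          ennreal (\<alpha> ^ s * k \<alpha>) * indicator {0<..} \<alpha> * ennreal (1 / Z)"
      proof (cases "\<alpha> > 0")
        case True
        then show ?thesis unfolding fdef using Zpos knn[of \<alpha>]
          by (simp add: ennreal_mult[symmetric] del: ennreal_mult')
      qed simp
    qed
    also have "\<dots> = (\<integral>\<^sup>+ \<alpha>\<in>{0<..}. ennreal (\<alpha> ^ s * k \<alpha>) \<partial>lborel) * ennreal (1 / Z)"
      by (rule nn_integral_multc) measurable
    finally show ?thesis .
  qed
  have one: "(\<integral>\<^sup>+ \<alpha>\<in>{0<..}. ennreal (\<alpha> ^ 0 * gen_gamma_density a d p \<alpha>) \<partial>lborel) = 1"
    unfolding fmom eqk[symmetric] kZ using Zpos
    by (simp add: ennreal_mult[symmetric] del: ennreal_mult')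
  note pr = prior_from[OF fm fnn fz one]
  have a2: "A2 (gen_gamma_density a d p)"
  proof (rule A2I[of a "exp (- 1) / Z" "1 / Z"])
    fix \<alpha> :: real assume al: "\<alpha> \<in> {0<..<a}"
    have "(\<alpha> / a) powr p \<le> 1" using al a p by (intro powr_le1) auto
    then have e1: "exp (- 1) \<le> exp (- ((\<alpha> / a) powr p))" by simp
    have e2: "exp (- ((\<alpha> / a) powr p)) \<le> 1" by simp
    have fa: "gen_gamma_density a d p \<alpha> = \<alpha> powr (d - 1) * exp (- ((\<alpha> / a) powr p)) / Z"
      unfolding fdef k_def gen_gamma_kernel_def using al by simp
    have "exp (- 1) * \<alpha> powr (d - 1) \<le> \<alpha> powr (d - 1) * exp (- ((\<alpha> / a) powr p))"
      using mult_right_mono[OF e1, of "\<alpha> powr (d - 1)"] by (simp only: mult.commute) simp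
    moreover have "\<alpha> powr (d - 1) * exp (- ((\<alpha> / a) powr p)) \<le> \<alpha> powr (d - 1)"
      using e2 mult_left_mono[OF e2, of "\<alpha> powr (d - 1)"] by simp
    ultimately show "exp (- 1) / Z * \<alpha> powr (d - 1) \<le> gen_gamma_density a d p \<alpha> \<and>
         gen_gamma_density a d p \<alpha> \<le> 1 / Z * \<alpha> powr (d - 1)"
      unfolding fa using Zpos by (auto simp: divide_right_mono)
  qed (use a Zpos in auto)
  have a3: "A3_rho (gen_gamma_density a d p) \<rho>" if r: "\<rho> > 0" for \<rho>
  proof -
    obtain K where K: "\<forall>s::nat. (\<integral>\<^sup>+ \<alpha>\<in>{0<..}. ennreal (\<alpha> ^ s * k \<alpha>) \<partial>lborel)
      \<le> ennreal (exp K * (Gamma (d + real s) / \<rho> powr (d + real s)))" using mombound[OF r] by auto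
    define B where "B = exp K / Z"
    have B: "B > 0" unfolding B_def using Zpos by auto
    have "\<forall>s::nat. s \<ge> 1 \<longrightarrow> (\<integral>\<^sup>+ \<alpha>\<in>{0<..}. ennreal (\<alpha> ^ s * gen_gamma_density a d p \<alpha>) \<partial>lborel)
        < ennreal ((2 * B / (d * \<rho> powr d)) * \<rho> powr (- real s) * Gamma (d + real s + 1))"
    proof (intro allI impI)
      fix s :: nat
      have "(\<integral>\<^sup>+ \<alpha>\<in>{0<..}. ennreal (\<alpha> ^ s * gen_gamma_density a d p \<alpha>) \<partial>lborel)
          \<le> ennreal (exp K * (Gamma (d + real s) / \<rho> powr (d + real s))) * ennreal (1 / Z)"
        unfolding fmom using K by (intro mult_right_mono) auto
      also have "\<dots> = ennreal (B * (Gamma (d + real s) / \<rho> powr (d + real s)))"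
        unfolding B_def using Zpos d r Gamma_real_pos[of "d + real s"]
        by (simp add: ennreal_mult[symmetric] del: ennreal_mult')
      also have "\<dots> < ennreal ((2 * B / (d * \<rho> powr d)) * \<rho> powr (- real s) * Gamma (d + real s + 1))"
        using moment_ineq[OF B d r, of s] B d r Gamma_real_pos[of "d + real s"]
        by (subst ennreal_less_iff) auto
      finally show "(\<integral>\<^sup>+ \<alpha>\<in>{0<..}. ennreal (\<alpha> ^ s * gen_gamma_density a d p \<alpha>) \<partial>lborel)
        < ennreal ((2 * B / (d * \<rho> powr d)) * \<rho> powr (- real s) * Gamma (d + real s + 1))" .
    qed
    moreover have "2 * B / (d * \<rho> powr d) > 0" using B d r by auto
    ultimately show ?thesis unfolding A3_rho_def A3_with_def using r d by blast
  qed
  have "A3 (gen_gamma_density a d p)" unfolding A3_def using a3[OF zero_less_one] by blast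
  then show ?thesis using pr a2 a3 by blast
qed


lemma pow_fact_le_exp:
  fixes x :: real assumes x: "0 \<le> x"
  shows "x ^ n \<le> fact n * exp x"
proof -
  have s: "(\<lambda>n. x ^ n /\<^sub>R fact n) sums exp x" by (rule exp_converges)
  have "sum (\<lambda>n. x ^ n /\<^sub>R fact n) {n} \<le> suminf (\<lambda>n. x ^ n /\<^sub>R fact n)"
    using s x by (intro sum_le_suminf) (auto simp: sums_iff)
  then have "x ^ n / fact n \<le> exp x" using s by (simp add: sums_iff divide_inverse_commute)
  then show ?thesis by (simp add: divide_le_eq mult.commute)
qed

lemma part1:
  fixes M :: "real measure" and f :: "real \<Rightarrow> real" and c :: real
  assumes pr: "prior_on_pos M" and Mc: "emeasure M {0<..c} = 1" and a1: "A1 M f"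
  shows "A3 f \<and> (\<forall>\<rho>>0. A3_rho f \<rho>)"
proof -
  have fm[measurable]: "f \<in> borel_measurable borel" and fnn: "\<And>x. 0 \<le> f x"
    and Md: "M = density lborel (\<lambda>x. ennreal (f x))" using a1 unfolding A1_def by auto
  have ps: "prob_space M" and sM: "sets M = sets borel" using pr unfolding prior_on_pos_def by auto
  have c: "c > 0"
  proof (rule ccontr)
    assume "\<not> c > 0"
    then have "{0<..c} = {}" by auto
    then show False using Mc by simp
  qed
  have spM: "space M = UNIV" using sM by (metis sets_eq_imp_space_eq space_borel)
  have "emeasure M UNIV = 1" using prob_space.emeasure_space_1[OF ps] spM by simp
  moreover have "emeasure M (UNIV - {0<..c}) = emeasure M UNIV - emeasure M {0<..c}"
    using Mc sM by (intro emeasure_Diff) auto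
  ultimately have "emeasure M (UNIV - {0<..c}) = 0" using Mc by simp
  then have "(\<integral>\<^sup>+x. ennreal (f x) * indicator (UNIV - {0<..c}) x \<partial>lborel) = 0"
    unfolding Md by (subst (asm) emeasure_density) auto
  then have "AE x in lborel. ennreal (f x) * indicator (UNIV - {0<..c}) x = 0"
    by (subst (asm) nn_integral_0_iff_AE) auto
  then have AEz: "AE x in lborel. x \<notin> {0<..c} \<longrightarrow> f x = 0"
    by eventually_elim (use fnn in \<open>auto simp: indicator_def\<close>)
  have mom: "(\<integral>\<^sup>+ \<alpha>\<in>{0<..}. ennreal (\<alpha> ^ s * f \<alpha>) \<partial>lborel) \<le> ennreal (c ^ s)" for s :: nat
  proof -
    have "(\<integral>\<^sup>+ \<alpha>\<in>{0<..}. ennreal (\<alpha> ^ s * f \<alpha>) \<partial>lborel)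
        \<le> (\<integral>\<^sup>+ \<alpha>. ennreal (c ^ s) * (ennreal (f \<alpha>) * indicator {0<..c} \<alpha>) \<partial>lborel)"
    proof (rule nn_integral_mono_AE)
      show "AE \<alpha> in lborel. ennreal (\<alpha> ^ s * f \<alpha>) * indicator {0<..} \<alpha>
          \<le> ennreal (c ^ s) * (ennreal (f \<alpha>) * indicator {0<..c} \<alpha>)"
        using AEz
      proof eventually_elim
        case (elim \<alpha>)
        show ?case
        proof (cases "\<alpha> \<in> {0<..c}")
          case True
          then have "\<alpha> ^ s * f \<alpha> \<le> c ^ s * f \<alpha>" using fnn by (intro mult_right_mono power_mono) auto
          then show ?thesis using True c fnn[of \<alpha>]
            by (simp add: ennreal_mult[symmetric] ennreal_leI del: ennreal_mult')
        next
          case False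
          then show ?thesis using elim by (auto simp: indicator_def)
        qed
      qed
    qed
    also have "\<dots> = ennreal (c ^ s) * (\<integral>\<^sup>+ \<alpha>. ennreal (f \<alpha>) * indicator {0<..c} \<alpha> \<partial>lborel)"
      by (rule nn_integral_cmult) measurable
    also have "(\<integral>\<^sup>+ \<alpha>. ennreal (f \<alpha>) * indicator {0<..c} \<alpha> \<partial>lborel) = emeasure M {0<..c}"
      unfolding Md by (subst emeasure_density) auto
    finally show ?thesis using Mc by simp
  qed
  have a3: "A3_rho f \<rho>" if r: "\<rho> > 0" for \<rho>
  proof -
    define D where "D = exp (c * \<rho>) + 1"
    have D: "D > 0" unfolding D_def by (smt (verit) exp_gt_zero)
    have "\<forall>s::nat. s \<ge> 1 \<longrightarrow> (\<integral>\<^sup>+ \<alpha>\<in>{0<..}. ennreal (\<alpha> ^ s * f \<alpha>) \<partial>lborel)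
        < ennreal (D * \<rho> powr (- real s) * Gamma (1 + real s + 1))"
    proof (intro allI impI)
      fix s :: nat
      have g: "Gamma (1 + real s + 1) = fact (s + 1)"
        using Gamma_fact[of "s + 1", where 'a = real] by (simp add: add_ac)
      have "(c * \<rho>) ^ s \<le> fact s * exp (c * \<rho>)" using c r by (intro pow_fact_le_exp) auto
      also have "\<dots> < fact (s + 1) * D"
      proof -
        have "fact s * exp (c * \<rho>) \<le> fact (s + 1) * exp (c * \<rho>)"
          by (intro mult_right_mono) (auto simp: fact_mono)
        also have "\<dots> < fact (s + 1) * D" unfolding D_def
          by (intro mult_strict_left_mono) auto
        finally show ?thesis .
      qed
      finally have "c ^ s * \<rho> ^ s < fact (s + 1) * D" by (simp add: power_mult_distrib)
      then have "c ^ s < D * \<rho> powr (- real s) * Gamma (1 + real s + 1)"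
        unfolding g using r by (simp add: powr_minus powr_realpow field_simps)
      then have "ennreal (c ^ s) < ennreal (D * \<rho> powr (- real s) * Gamma (1 + real s + 1))"
        using c by (subst ennreal_less_iff) auto
      with mom[of s] show "(\<integral>\<^sup>+ \<alpha>\<in>{0<..}. ennreal (\<alpha> ^ s * f \<alpha>) \<partial>lborel)
        < ennreal (D * \<rho> powr (- real s) * Gamma (1 + real s + 1))" by (rule le_less_trans)
    qed
    then show ?thesis unfolding A3_rho_def A3_with_def using r D zero_less_one by blast
  qed
  have "A3 f" unfolding A3_def using a3[OF zero_less_one] by blast
  then show ?thesis using a3 by blast
qed

theorem lemma1:
  shows
   "(\<forall>(M::real measure) f c. prior_on_pos M \<and> emeasure M {0<..c} = 1 \<and> A1 M f \<and> A2 f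
        \<longrightarrow> A3 f \<and> (\<forall>\<rho>>0. A3_rho f \<rho>))
    \<and> (\<forall>a d p. a > 0 \<and> d > 0 \<and> p > 1 \<longrightarrow>
        (let f = gen_gamma_density a d p;
             M = density lborel (\<lambda>x. ennreal (f x))
         in prior_on_pos M \<and> A1 M f \<and> A2 f \<and> A3 f \<and> (\<forall>\<rho>>0. A3_rho f \<rho>)))
    \<and> (\<forall>\<nu> \<rho>. \<nu> > 0 \<and> \<rho> > 0 \<longrightarrow>
        (let f = gamma_density \<nu> \<rho>;
             M = density lborel (\<lambda>x. ennreal (f x))
         in prior_on_pos M \<and> A1 M f \<and> A2 f \<and> A3 f \<and> A3_rho f \<rho>))"
proof -
  have P1: "\<forall>(M::real measure) f c. prior_on_pos M \<and> emeasure M {0<..c} = 1 \<and> A1 M f \<and> A2 f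
        \<longrightarrow> A3 f \<and> (\<forall>\<rho>>0. A3_rho f \<rho>)"
    using part1 by blast
  have P2: "\<forall>a d p. a > 0 \<and> d > 0 \<and> p > 1 \<longrightarrow>
        (let f = gen_gamma_density a d p;
             M = density lborel (\<lambda>x. ennreal (f x))
         in prior_on_pos M \<and> A1 M f \<and> A2 f \<and> A3 f \<and> (\<forall>\<rho>>0. A3_rho f \<rho>))"
    using part2 by (simp add: Let_def)
  have P3: "\<forall>\<nu> \<rho>. \<nu> > 0 \<and> \<rho> > 0 \<longrightarrow>
        (let f = gamma_density \<nu> \<rho>;
             M = density lborel (\<lambda>x. ennreal (f x))
         in prior_on_pos M \<and> A1 M f \<and> A2 f \<and> A3 f \<and> A3_rho f \<rho>)"
    using part3 by (simp add: Let_def)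
  show ?thesis using P1 P2 P3 by blast
qed

end
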